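(* Let $\ell>0$ and let $\xi:(\tau_{\min},\tau_{\max})\to\mathbb{R}^4$ be a worldline whose image is contained in a two-dimensional timelike plane $P$ of Minkowski spacetime. Then for every $\tau_0\in(\tau_{\min},\tau_{\max})$, in an inertial coordinate system (obtained from the original by an orthochronous Lorentz transformation) in which $\dot\xi^a(\tau_0)=\delta^a_0$, and for every $\sigma\in\{1,2,3\}$, the integral $$\int_0^\infty \frac{\big(\tanh\psi(\zeta,\xi(\tau_0))\,\mu^\sigma(\zeta,\xi(\tau_0))-\tanh\chi(\zeta,\xi(\tau_0))\,\nu^\sigma(\zeta,\xi(\tau_0))\big)\,J_2(\zeta/\ell)}{\Delta(\zeta,\xi(\tau_0))\,\zeta}\,d\zeta$$ is absolutely convergent.
   Context: Minkowski spacetime is $\mathbb{R}^4$ with inertial coordinates $(x^0,\dots,x^3)$ and metric $\eta_{ab}=\mathrm{diag}(-1,1,1,1)$ ($c=1$); spatial indices $\rho,\sigma,\kappa\in\{1,2,3\}$ are raised/lowered with $\delta_{\rho\sigma}$. $J_2$ is the Bessel function of the first kind of order 2. A worldline is an inextendible, future-oriented, timelike $C^\infty$ curve $\xi(\tau)$, $\tau\in(\tau_{\min},\tau_{\max})$ ($\tau_{\min}\in\mathbb{R}\cup\{-\infty\}$, $\tau_{\max}\in\mathbb{R}\cup\{+\infty\}$), parametrized by proper time: $\eta_{ab}\dot\xi^a\dot\xi^b=-1$. For events with $y$ in the chronological past of $x$ (i.e. $x-y$ timelike, future-pointing), $D(x-y)=\sqrt{-\eta_{ab}(x^a-y^a)(x^b-y^b)}$.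 For $x=\xi(\tau_0)$ and $\zeta\in(0,\infty)$, $\varpi(\zeta,x)$ is the unique $\tau\in(\tau_{\min},\tau_0)$ with $D(x-\xi(\tau))=\zeta$ (the map $\tau\mapsto D(x-\xi(\tau))$ is a strictly decreasing bijection from $(\tau_{\min},\tau_0)$ onto $(0,\infty)$). Define functions $\chi,\psi$ and spatial unit vectors $\nu,\mu$ (Euclidean norm 1) by $\dot\xi^a(\varpi(\zeta,x))=\cosh\chi(\zeta,x)\,\delta^a_0+\sinh\chi(\zeta,x)\,\nu^\rho(\zeta,x)\,\delta^a_\rho$ and $x^a-\xi^a(\varpi(\zeta,x))=\zeta\big(\cosh\psi(\zeta,x)\,\delta^a_0+\sinh\psi(\zeta,x)\,\mu^\rho(\zeta,x)\,\delta^a_\rho\big)$, and set $\Delta(\zeta,x)=1-\tanh\psi(\zeta,x)\tanh\chi(\zeta,x)\,\mu^\kappa(\zeta,x)\nu_\kappa(\zeta,x)$. *)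

theory Defs
  imports "HOL-Analysis.Analysis" "HOL-Library.Extended_Real"
begin

text \<open>Events of Minkowski spacetime: pairs (time component x^0, spatial part (x^1,x^2,x^3)).\<close>
type_synonym event = "real \<times> (real ^ 3)"

definition mink :: "event \<Rightarrow> event \<Rightarrow> real" where
  "mink u v = - fst u * fst v + snd u \<bullet> snd v"

definition e0 :: event where "e0 = (1, 0)"

definition besselJ2 :: "real \<Rightarrow> real" where
  "besselJ2 x = (\<Sum>m. (-1) ^ m / (fact m * fact (m + 2)) * (x / 2) ^ (2 * m + 2))"

definition mdist :: "event \<Rightarrow> real" where
  "mdist v = sqrt (- mink v v)"

definition dom_I :: "ereal \<Rightarrow> ereal \<Rightarrow> real set" where
  "dom_I a b = {t. a < ereal t \<and> ereal t < b}"

definition smooth_curve :: "ereal \<Rightarrow> ereal \<Rightarrow> (real \<Rightarrow> event) \<Rightarrow> bool" where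
  "smooth_curve a b \<xi> \<longleftrightarrow> (\<exists>Df :: nat \<Rightarrow> real \<Rightarrow> event.
     (\<forall>t\<in>dom_I a b. Df 0 t = \<xi> t) \<and>
     (\<forall>k. \<forall>t\<in>dom_I a b. (Df k has_vector_derivative Df (Suc k) t) (at t)))"

definition inextendible :: "ereal \<Rightarrow> ereal \<Rightarrow> (real \<Rightarrow> event) \<Rightarrow> bool" where
  "inextendible a b \<xi> \<longleftrightarrow>
     (\<forall>t. a = ereal t \<longrightarrow> \<not> (\<exists>L. (\<xi> \<longlongrightarrow> L) (at_right t))) \<and>
     (\<forall>t. b = ereal t \<longrightarrow> \<not> (\<exists>L. (\<xi> \<longlongrightarrow> L) (at_left t)))"

definition worldline :: "ereal \<Rightarrow> ereal \<Rightarrow> (real \<Rightarrow> event) \<Rightarrow> bool" where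
  "worldline a b \<xi> \<longleftrightarrow> a < b \<and> smooth_curve a b \<xi> \<and> inextendible a b \<xi> \<and>
     (\<forall>t\<in>dom_I a b. mink (vector_derivative \<xi> (at t)) (vector_derivative \<xi> (at t)) = -1
                     \<and> fst (vector_derivative \<xi> (at t)) > 0)"

definition timelike_plane :: "event set \<Rightarrow> bool" where
  "timelike_plane P \<longleftrightarrow> (\<exists>p u w. independent {u, w} \<and> u \<noteq> w \<and>
      (\<exists>s t. mink (s *\<^sub>R u + t *\<^sub>R w) (s *\<^sub>R u + t *\<^sub>R w) < 0) \<and>
      P = {p + s *\<^sub>R u + t *\<^sub>R w | s t. True})"

definition lorentz_orthochronous :: "(event \<Rightarrow> event) \<Rightarrow> bool" where
  "lorentz_orthochronous L \<longleftrightarrow> linear L \<and> (\<forall>u v. mink (L u) (L v) = mink u v) \<and> fst (L e0) > 0"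

definition varpi :: "ereal \<Rightarrow> (real \<Rightarrow> event) \<Rightarrow> real \<Rightarrow> real \<Rightarrow> real" where
  "varpi a \<xi> \<tau>0 \<zeta> = (THE \<tau>. a < ereal \<tau> \<and> \<tau> < \<tau>0 \<and> mdist (\<xi> \<tau>0 - \<xi> \<tau>) = \<zeta>)"

definition rap_dir :: "event \<Rightarrow> real \<times> (real ^ 3)" where
  "rap_dir v = (SOME (c, n). c \<ge> 0 \<and> norm n = 1 \<and> fst v = cosh c \<and> snd v = sinh c *\<^sub>R n)"

definition chi :: "ereal \<Rightarrow> (real \<Rightarrow> event) \<Rightarrow> real \<Rightarrow> real \<Rightarrow> real" where
  "chi a \<xi> \<tau>0 \<zeta> = fst (rap_dir (vector_derivative \<xi> (at (varpi a \<xi> \<tau>0 \<zeta>))))"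
definition nu :: "ereal \<Rightarrow> (real \<Rightarrow> event) \<Rightarrow> real \<Rightarrow> real \<Rightarrow> real ^ 3" where
  "nu a \<xi> \<tau>0 \<zeta> = snd (rap_dir (vector_derivative \<xi> (at (varpi a \<xi> \<tau>0 \<zeta>))))"
definition psi :: "ereal \<Rightarrow> (real \<Rightarrow> event) \<Rightarrow> real \<Rightarrow> real \<Rightarrow> real" where
  "psi a \<xi> \<tau>0 \<zeta> = fst (rap_dir ((1 / \<zeta>) *\<^sub>R (\<xi> \<tau>0 - \<xi> (varpi a \<xi> \<tau>0 \<zeta>))))"
definition mu :: "ereal \<Rightarrow> (real \<Rightarrow> event) \<Rightarrow> real \<Rightarrow> real \<Rightarrow> real ^ 3" where
  "mu a \<xi> \<tau>0 \<zeta> = snd (rap_dir ((1 / \<zeta>) *\<^sub>R (\<xi> \<tau>0 - \<xi> (varpi a \<xi> \<tau>0 \<zeta>))))"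

definition Delta :: "ereal \<Rightarrow> (real \<Rightarrow> event) \<Rightarrow> real \<Rightarrow> real \<Rightarrow> real" where
  "Delta a \<xi> \<tau>0 \<zeta> = 1 - tanh (psi a \<xi> \<tau>0 \<zeta>) * tanh (chi a \<xi> \<tau>0 \<zeta>) * (mu a \<xi> \<tau>0 \<zeta> \<bullet> nu a \<xi> \<tau>0 \<zeta>)"

end

theory Submission
  imports Defs "HOL-Real_Asymp.Real_Asymp"
begin

definition ba :: "nat \<Rightarrow> real" where "ba m = (-1) ^ m / (fact m * fact (m + 2))"
definition bG :: "real \<Rightarrow> real" where "bG z = (\<Sum>m. ba m * z ^ m)"
definition bG1 :: "real \<Rightarrow> real" where "bG1 z = (\<Sum>m. diffs ba m * z ^ m)"
definition bG2 :: "real \<Rightarrow> real" where "bG2 z = (\<Sum>m. diffs (diffs ba) m * z ^ m)"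

lemma ba_summable: "summable (\<lambda>m. ba m * z ^ m)"
proof (rule summable_comparison_test[OF _ summable_exp[of "\<bar>z\<bar>"]])
  show "\<exists>N. \<forall>n\<ge>N. norm (ba n * z ^ n) \<le> inverse (fact n) * \<bar>z\<bar> ^ n"
  proof (intro exI allI impI)
    fix n :: nat
    have H: "\<And>A B::real. A \<ge> 1 \<Longrightarrow> B \<ge> 1 \<Longrightarrow> \<bar>(-1)^n/(A*B) * z^n\<bar> \<le> inverse A * \<bar>z\<bar>^n"
    proof -
      fix A B :: real assume A: "A \<ge> 1" and B: "B \<ge> 1"
      have "\<bar>(-1)^n/(A*B) * z^n\<bar> = \<bar>z\<bar>^n / (A*B)" using A B by (simp add: abs_mult power_abs)
      also have "\<dots> \<le> \<bar>z\<bar>^n / A" using A B by (intro divide_left_mono) (auto simp: mult_le_cancel_left1)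
      finally show "\<bar>(-1)^n/(A*B) * z^n\<bar> \<le> inverse A * \<bar>z\<bar>^n" by (simp add: divide_inverse mult.commute)
    qed
    show "norm (ba n * z ^ n) \<le> inverse (fact n) * \<bar>z\<bar> ^ n"
      unfolding ba_def real_norm_def by (rule H) (rule fact_ge_1)+
  qed
qed

lemma ba1_summable: "summable (\<lambda>m. diffs ba m * z ^ m)"
  by (rule termdiff_converges_all) (rule ba_summable)
lemma ba2_summable: "summable (\<lambda>m. diffs (diffs ba) m * z ^ m)"
  by (rule termdiff_converges_all) (rule ba1_summable)

lemma bG_deriv: "(bG has_real_derivative bG1 z) (at z)"
  unfolding bG_def bG1_def by (rule termdiffs_strong_converges_everywhere) (rule ba_summable)
lemma bG1_deriv: "(bG1 has_real_derivative bG2 z) (at z)"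
  unfolding bG1_def bG2_def by (rule termdiffs_strong_converges_everywhere) (rule ba1_summable)

lemma bG_ode: "z * bG2 z + 3 * bG1 z + bG z = 0"
proof -
  define f where "f k = real k * diffs ba k * z ^ k" for k
  have "(\<lambda>n. f (Suc n)) sums (z * bG2 z)"
  proof -
    have "(\<lambda>n. z * (diffs (diffs ba) n * z ^ n)) sums (z * bG2 z)"
      unfolding bG2_def by (rule sums_mult) (rule summable_sums[OF ba2_summable])
    moreover have "z * (diffs (diffs ba) n * z ^ n) = f (Suc n)" for n
      by (simp add: f_def diffs_def algebra_simps)
    ultimately show ?thesis by simp
  qed
  hence s1: "f sums (z * bG2 z)" using sums_Suc_iff[of f "z * bG2 z"] by (simp add: f_def)
  have s2: "(\<lambda>k. 3 * (diffs ba k * z ^ k)) sums (3 * bG1 z)"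
    unfolding bG1_def by (rule sums_mult) (rule summable_sums[OF ba1_summable])
  have s3: "(\<lambda>k. ba k * z ^ k) sums bG z"
    unfolding bG_def by (rule summable_sums[OF ba_summable])
  have "(\<lambda>k. f k + 3 * (diffs ba k * z ^ k) + ba k * z ^ k) sums (z * bG2 z + 3 * bG1 z + bG z)"
    by (intro sums_add s1 s2 s3)
  moreover have "f k + 3 * (diffs ba k * z ^ k) + ba k * z ^ k = 0" for k
  proof -
    have e1: "fact (Suc k) = (real k + 1) * (fact k::real)" by simp
    have e2: "(fact (Suc k + 2)::real) = (real k + 3) * fact (k+2)" by (simp add: algebra_simps)
    have G: "\<And>A B::real. A>0 \<Longrightarrow> B>0 \<Longrightarrow> (real k + 1) * (real k + 3) * ((-1)^Suc k/(((real k + 1)*A)*((real k + 3)*B))) = -((-1)^k/(A*B))"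
    proof -
      fix A B :: real assume "A > 0" "B > 0"
      define c where "c = (real k + 1) * (real k + 3)"
      have c: "c \<noteq> 0" unfolding c_def by (simp add: add_pos_pos)
      have q1: "(-1)^Suc k/(((real k + 1)*A)*((real k + 3)*B)) = (-1)^Suc k / (c*(A*B))"
        unfolding c_def by (simp add: mult_ac)
      have q2: "c * ((-1)^Suc k / (c*(A*B))) = (-1)^Suc k / (A*B)"
        using c \<open>A > 0\<close> \<open>B > 0\<close> by (simp add: field_simps)
      have "c * ((-1)^Suc k/(((real k + 1)*A)*((real k + 3)*B))) = (-1)^Suc k / (A*B)"
        by (subst q1) (rule q2)
      thus "(real k + 1) * (real k + 3) * ((-1)^Suc k/(((real k + 1)*A)*((real k + 3)*B))) = -((-1)^k/(A*B))"
        unfolding c_def by simp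
    qed
    have "(real k + 1) * (real k + 3) * ba (Suc k) = - ba k"
      unfolding ba_def e1 e2 by (rule G) auto
    hence "real k * diffs ba k + 3 * diffs ba k = - ba k"
      by (simp add: diffs_def algebra_simps)
    hence "(real k * diffs ba k + 3 * diffs ba k) * z ^ k = - ba k * z ^ k" by simp
    thus ?thesis by (simp add: f_def algebra_simps)
  qed
  ultimately have "(\<lambda>k. 0::real) sums (z * bG2 z + 3 * bG1 z + bG z)" by simp
  thus ?thesis using sums_unique2[OF _ sums_zero] by blast
qed

lemma J2_eq: "besselJ2 x = (x^2/4) * bG (x^2/4)"
proof -
  have "(\<lambda>m. (x^2/4) * (ba m * (x^2/4) ^ m)) sums ((x^2/4) * bG (x^2/4))"
    unfolding bG_def by (rule sums_mult) (rule summable_sums[OF ba_summable])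
  moreover have "(x^2/4) * (ba m * (x^2/4) ^ m) = (-1) ^ m / (fact m * fact (m + 2)) * (x / 2) ^ (2 * m + 2)" for m
  proof -
    have "(x/2)^(2*m+2) = (x^2/4) * (x^2/4)^m"
      by (simp add: power_mult power_divide power2_eq_square)
    thus ?thesis by (simp add: ba_def divide_simps mult_ac)
  qed
  ultimately show ?thesis unfolding besselJ2_def by (simp add: sums_iff)
qed

definition y1f :: "real \<Rightarrow> real" where
  "y1f x = (x/2) * (bG (x^2/4) + (x^2/4) * bG1 (x^2/4))"
definition y2f :: "real \<Rightarrow> real" where
  "y2f x = (bG (x^2/4) + (x^2/4) * bG1 (x^2/4)) / 2 + (x^2/4) * (2 * bG1 (x^2/4) + (x^2/4) * bG2 (x^2/4))"

lemma J2_fun: "besselJ2 = (\<lambda>x. (x^2/4) * bG (x^2/4))"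
  by (rule ext) (rule J2_eq)

lemma DERIV_eqI: "(f has_real_derivative a) F \<Longrightarrow> a = b \<Longrightarrow> (f has_real_derivative b) F" by simp

lemma sq4_deriv: "((\<lambda>x::real. x^2/4) has_real_derivative x/2) (at x)"
  by (auto intro!: derivative_eq_intros)

lemma bG_deriv': "((\<lambda>x. bG (x^2/4)) has_real_derivative (bG1 (x^2/4) * (x/2))) (at x)"
  using DERIV_chain2[OF bG_deriv sq4_deriv] by simp
lemma bG1_deriv': "((\<lambda>x. bG1 (x^2/4)) has_real_derivative (bG2 (x^2/4) * (x/2))) (at x)"
  using DERIV_chain2[OF bG1_deriv sq4_deriv] by simp

lemma J2_deriv: "(besselJ2 has_real_derivative y1f x) (at x)"
  unfolding J2_fun y1f_def
  by (rule DERIV_eqI[OF DERIV_mult[OF sq4_deriv bG_deriv']]) (simp add: algebra_simps)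

lemma y1_deriv: "(y1f has_real_derivative y2f x) (at x)"
proof -
  have "y1f = (\<lambda>x. (x/2) * (bG (x^2/4) + (x^2/4) * bG1 (x^2/4)))" by (rule ext) (simp add: y1f_def)
  moreover have h: "((\<lambda>x::real. x/2) has_real_derivative 1/2) (at x)" by (auto intro!: derivative_eq_intros)
  have "((\<lambda>x. (x/2) * (bG (x^2/4) + (x^2/4) * bG1 (x^2/4))) has_real_derivative y2f x) (at x)"
    unfolding y2f_def
    by (rule DERIV_eqI[OF DERIV_mult[OF h DERIV_add[OF bG_deriv' DERIV_mult[OF sq4_deriv bG1_deriv']]]]) (simp add: field_simps power2_eq_square)
  ultimately show ?thesis by simp
qed

lemma J2_ode: "x^2 * y2f x + x * y1f x + (x^2 - 4) * besselJ2 x = 0"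
proof -
  define z where "z = x^2/4"
  have x2: "x^2 = 4 * z" unfolding z_def by simp
  have o: "z * bG2 z + 3 * bG1 z + bG z = 0" by (rule bG_ode)
  show ?thesis
    unfolding y1f_def y2f_def J2_eq z_def[symmetric] using x2 o by algebra
qed

definition bE :: "real \<Rightarrow> real" where
  "bE x = x * (besselJ2 x)^2 + x * (2 * x * y1f x + besselJ2 x)^2 / (4 * (x^2 - 15/4))"

lemma energy_alg:
  fixes x y y1 y2 D :: real
  assumes D: "D \<noteq> 0" and x: "x \<noteq> 0" and Dd: "D = x^2 - 15/4" and ode: "x^2*y2 + x*y1 + (x^2-4)*y = 0"
  shows "1 * y\<^sup>2 + real 2 * (y1 * y ^ (2 - Suc 0)) * x + ((1 * (2*x*y1+y)\<^sup>2 + real 2 * (((0 * x + 1 * 2) * y1 + y2 * (2 * x) + y1) * (2*x*y1+y) ^ (2 - Suc 0)) * x) * (4 * D) - x * (2*x*y1+y)\<^sup>2 * (0 * D + (real 2 * (1 * x ^ (2 - Suc 0)) - 0) * 4)) / (4 * D * (4 * D))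
   = -(15/4) * (2 * x * y1 + y)^2 / (2 * D^2)"
proof -
  have e: "(y\<^sup>2 + x * (2 * y * y1)) * (16 * D^2) +
     ((2 * x * y1 + y)\<^sup>2 + x * (2 * (2 * x * y1 + y) * (2 * y1 + 2 * x * y2 + y1))) * (4 * D)
     - x * (2 * x * y1 + y)\<^sup>2 * (4 * (2 * x)) = -(15/4) * (2 * x * y1 + y)^2 * 8"
    using Dd ode by algebra
  have l: "1 * y\<^sup>2 + real 2 * (y1 * y ^ (2 - Suc 0)) * x + ((1 * (2*x*y1+y)\<^sup>2 + real 2 * (((0 * x + 1 * 2) * y1 + y2 * (2 * x) + y1) * (2*x*y1+y) ^ (2 - Suc 0)) * x) * (4 * D) - x * (2*x*y1+y)\<^sup>2 * (0 * D + (real 2 * (1 * x ^ (2 - Suc 0)) - 0) * 4)) / (4 * D * (4 * D)) = 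
     ((y\<^sup>2 + x * (2 * y * y1)) * (16 * D^2) +
     ((2 * x * y1 + y)\<^sup>2 + x * (2 * (2 * x * y1 + y) * (2 * y1 + 2 * x * y2 + y1))) * (4 * D)
     - x * (2 * x * y1 + y)\<^sup>2 * (4 * (2 * x))) / (16 * D^2)"
    using D by (simp add: field_simps power2_eq_square)
  have r: "-(15/4) * (2 * x * y1 + y)^2 / (2 * D^2) = (-(15/4) * (2 * x * y1 + y)^2 * 8) / (16 * D^2)"
    using D by (simp add: field_simps power2_eq_square)
  show ?thesis unfolding l r e ..
qed

lemma x2_gt: "x > 2 \<Longrightarrow> x^2 - 15/4 > (0::real)"
proof -
  assume x: "x > 2"
  have "2*2 < x*x" using x by (intro mult_strict_mono) auto
  thus ?thesis by (simp add: power2_eq_square)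
qed

lemma bE_deriv:
  assumes x: "x > 2"
  shows "(bE has_real_derivative -(15/4) * (2 * x * y1f x + besselJ2 x)^2 / (2 * (x^2 - 15/4)^2)) (at x)"
  unfolding bE_def[abs_def]
  apply (rule DERIV_eqI)
  apply (rule derivative_eq_intros J2_deriv y1_deriv refl | simp only:)+
  using x2_gt[OF x] apply simp
  apply (rule refl)
  apply (rule energy_alg)
  using x2_gt[OF x] x J2_ode by auto

lemma bE_mono: assumes "3 \<le> x" shows "bE x \<le> bE 3"
proof -
  have "\<And>t. 3 \<le> t \<Longrightarrow> t \<le> x \<Longrightarrow> \<exists>y. (bE has_real_derivative y) (at t) \<and> y \<le> 0"
  proof -
    fix t :: real assume t: "3 \<le> t"
    have "0 \<le> (15/4) * (2 * t * y1f t + besselJ2 t)^2 / (2 * (t^2 - 15/4)^2)" by simp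
    thus "\<exists>y. (bE has_real_derivative y) (at t) \<and> y \<le> 0"
      using bE_deriv[of t] t by (intro exI[of _ "-(15/4) * (2 * t * y1f t + besselJ2 t)^2 / (2 * (t^2 - 15/4)^2)"]) auto
  qed
  from DERIV_nonpos_imp_nonincreasing[OF assms this] show ?thesis .
qed

lemma J2_sq_bound: assumes "3 \<le> x" shows "(besselJ2 x)^2 \<le> bE 3 / x"
proof -
  have D: "x^2 - 15/4 > 0" using x2_gt[of x] assms by auto
  have "x * (besselJ2 x)^2 \<le> bE x"
    unfolding bE_def using D assms by (intro add_increasing2 divide_nonneg_pos) auto
  hence "x * (besselJ2 x)^2 \<le> bE 3" using bE_mono[OF assms] by linarith
  thus ?thesis using assms by (simp add: field_simps)
qed

lemma J2_over_x: "besselJ2 x / x = (x/4) * bG (x^2/4)"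
  by (cases "x = 0") (simp_all add: J2_eq power2_eq_square)

lemma bG_cont: "continuous_on S (\<lambda>x. (x/4) * bG (x^2/4))"
proof (rule continuous_at_imp_continuous_on, rule ballI)
  fix x assume "x \<in> S"
  have "isCont (\<lambda>x. bG (x^2/4)) x" by (rule DERIV_isCont[OF bG_deriv'])
  thus "isCont (\<lambda>x. (x/4) * bG (x^2/4)) x" by (intro continuous_intros) auto
qed

lemma J2_bound: "\<exists>M. \<forall>x>0. \<bar>besselJ2 x\<bar> / x \<le> M / ((1+x) * sqrt (1+x))"
proof -
  have "bounded ((\<lambda>x. (x/4) * bG (x^2/4)) ` {0..3})"
    using compact_imp_bounded[OF compact_continuous_image[OF bG_cont compact_Icc[of 0 3]]] .
  then obtain B where B0: "\<forall>y\<in>((\<lambda>x. (x/4) * bG (x^2/4)) ` {0..3}). norm y \<le> B"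
    unfolding bounded_iff by blast
  have B: "\<And>x. x \<in> {0..3} \<Longrightarrow> norm ((x/4) * bG (x^2/4)) \<le> B"
    using B0 by blast
  define E where "E = bE 3"
  have E: "E \<ge> 0" using J2_sq_bound[of 3] zero_le_power2[of "besselJ2 3"] unfolding E_def by linarith
  define M where "M = 8 * B + 3 * sqrt E"
  have B0: "B \<ge> 0" using B[of 0] by auto
  show ?thesis
  proof (intro exI[of _ M] allI impI)
    fix x :: real assume x: "x > 0"
    have pos: "(1+x) * sqrt (1+x) > 0" using x by auto
    show "\<bar>besselJ2 x\<bar> / x \<le> M / ((1+x) * sqrt (1+x))"
    proof (cases "x \<le> 3")
      case True
      have "\<bar>besselJ2 x\<bar> / x = norm ((x/4) * bG (x^2/4))"
      proof -
        have "\<bar>besselJ2 x\<bar> / x = \<bar>besselJ2 x / x\<bar>" using x by simp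
        thus ?thesis by (simp only: J2_over_x real_norm_def)
      qed
      also have "\<dots> \<le> B" using B True x by auto
      also have "B \<le> 8 * B / ((1+x) * sqrt (1+x))"
      proof -
        have "sqrt (1+x) \<le> sqrt 4" using True by (intro real_sqrt_le_mono) auto
        hence s2: "sqrt (1+x) \<le> 2" by simp
        have "(1+x) * sqrt (1+x) \<le> 4 * 2" using True x s2 by (intro mult_mono) auto
        hence "B * ((1+x) * sqrt (1+x)) \<le> B * 8" using B0 by (intro mult_left_mono) auto
        thus ?thesis using pos by (simp add: pos_le_divide_eq)
      qed
      also have "\<dots> \<le> M / ((1+x) * sqrt (1+x))" unfolding M_def using pos E
        by (intro divide_right_mono) auto
      finally show ?thesis .
    next
      case False
      have "(besselJ2 x)^2 \<le> E / x" unfolding E_def using J2_sq_bound False by auto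
      hence "\<bar>besselJ2 x\<bar> \<le> sqrt (E / x)" by (intro real_le_rsqrt) simp
      hence "\<bar>besselJ2 x\<bar> \<le> sqrt E / sqrt x" by (simp add: real_sqrt_divide)
      hence "\<bar>besselJ2 x\<bar> / x \<le> sqrt E / sqrt x / x" using x by (intro divide_right_mono) auto
      also have "\<dots> = (3 * sqrt E) / (3 * (x * sqrt x))" by (simp add: field_simps)
      also have "\<dots> \<le> 3 * sqrt E / ((1+x) * sqrt (1+x))"
      proof (rule frac_le)
        have "sqrt (1+x) \<le> sqrt (2 * x)" using False by (intro real_sqrt_le_mono) auto
        hence a: "sqrt (1+x) \<le> sqrt 2 * sqrt x" by (simp add: real_sqrt_mult)
        have "sqrt 2 \<le> sqrt (9/4)" by (intro real_sqrt_le_mono) auto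
        moreover have "sqrt (9/4) = (3/2::real)" by (rule real_sqrt_unique) (auto simp: power2_eq_square)
        ultimately have "sqrt 2 \<le> (3/2::real)" by simp
        hence "sqrt 2 * sqrt x \<le> 3/2 * sqrt x" using x by (intro mult_right_mono) auto
        hence b: "sqrt (1+x) \<le> 3/2 * sqrt x" using a by linarith
        have "(1+x) * sqrt (1+x) \<le> (2 * x) * (3/2 * sqrt x)" using False b by (intro mult_mono) auto
        thus "(1+x) * sqrt (1+x) \<le> 3 * (x * sqrt x)" by simp
      qed (use pos E in auto)
      also have "\<dots> \<le> M / ((1+x) * sqrt (1+x))" unfolding M_def using pos B0
        by (intro divide_right_mono) auto
      finally show ?thesis .
    qed
  qed
qed

lemma h_integrable:
  fixes ell M :: real
  assumes l: "ell > 0" and M: "M \<ge> 0"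
  shows "(\<lambda>z. (M/ell) / ((1 + z/ell) * sqrt (1 + z/ell))) integrable_on {0<..}"
proof -
  define F where "F z = -2 * M / sqrt (1 + z/ell)" for z
  have "set_integrable lborel (einterval 0 \<infinity>) (\<lambda>z. (M/ell) / ((1 + z/ell) * sqrt (1 + z/ell)))"
  proof (rule interval_integral_FTC_nonneg(1)[where F=F and A="-2*M" and B=0])
    show "(0::ereal) < \<infinity>" by simp
    fix x :: real assume x: "0 < ereal x" "ereal x < \<infinity>"
    hence x0: "x > 0" by simp
    have p: "1 + x/ell > 0" using x0 l by (simp add: add_pos_pos)
    show "(F has_real_derivative (M/ell) / ((1 + x/ell) * sqrt (1 + x/ell))) (at x)"
    proof -
      define s where "s = sqrt (1 + x/ell)"
      have s0: "s > 0" unfolding s_def using p by simp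
      have ss: "s * s = 1 + x/ell" unfolding s_def using p by simp
      have d1: "((\<lambda>z. 1 + z/ell) has_real_derivative 1/ell) (at x)" using l by (auto intro!: derivative_eq_intros)
      have d2: "((\<lambda>z. sqrt (1 + z/ell)) has_real_derivative inverse (sqrt (1+x/ell))/2 * (1/ell)) (at x)"
        using DERIV_chain2[OF DERIV_real_sqrt[OF p] d1] by simp
      have d3: "(F has_real_derivative (0 * s - (-2*M) * (inverse s/2 * (1/ell))) / (s * s)) (at x)"
        unfolding F_def[abs_def] s_def by (rule DERIV_divide[OF DERIV_const d2]) (use p in simp)
      have e: "(0 * s - (-2*M) * (inverse s/2 * (1/ell))) / (s * s) = (M/ell) / ((1 + x/ell) * s)"
        unfolding ss[symmetric] using s0 l by (simp add: field_simps)
      from d3 have "(F has_real_derivative (M/ell) / ((1 + x/ell) * s)) (at x)" by (simp only: e)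
      thus ?thesis by (simp only: s_def)
    qed
    show "isCont (\<lambda>z. (M/ell) / ((1 + z/ell) * sqrt (1 + z/ell))) x"
      using p l by (intro continuous_intros) auto
  next
    show "AE x in lborel. 0 < ereal x \<longrightarrow> ereal x < \<infinity> \<longrightarrow> 0 \<le> (M/ell) / ((1 + x/ell) * sqrt (1 + x/ell))"
      using l M by (auto intro!: AE_I2 divide_nonneg_pos simp: add_pos_pos)
  next
    have "(F \<longlongrightarrow> F 0) (at_right 0)" unfolding F_def using l
      by (intro tendsto_intros) auto
    thus "((F \<circ> real_of_ereal) \<longlongrightarrow> -2*M) (at_right 0)"
      unfolding zero_ereal_def ereal_tendsto_simps by (simp add: F_def)
  next
    have "((\<lambda>z. -2 * M / sqrt (1 + z/ell)) \<longlongrightarrow> 0) at_top" using l by real_asymp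
    thus "((F \<circ> real_of_ereal) \<longlongrightarrow> 0) (at_left \<infinity>)"
      unfolding ereal_tendsto_simps F_def .
  qed
  moreover have "einterval 0 \<infinity> = {0<..}" by (simp add: zero_ereal_def)
  ultimately show ?thesis using set_borel_integral_eq_integral(1) by metis
qed

lemma integrand_abs_int:
  fixes ell :: real and g :: "real \<Rightarrow> real"
  assumes l: "ell > 0" and c: "continuous_on {0<..} g"
    and b: "\<And>z. z > 0 \<Longrightarrow> \<bar>g z\<bar> \<le> \<bar>besselJ2 (z/ell)\<bar> / z"
  shows "g absolutely_integrable_on {0<..}"
proof -
  obtain M where M: "\<And>x. x > 0 \<Longrightarrow> \<bar>besselJ2 x\<bar> / x \<le> M / ((1+x) * sqrt (1+x))"
    using J2_bound by blast
  have M0: "M \<ge> 0"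
  proof -
    have "0 \<le> \<bar>besselJ2 1\<bar> / 1" by simp
    also have "\<dots> \<le> M / ((1+1) * sqrt (1+1))" using M[of 1] by simp
    finally show ?thesis by (simp add: zero_le_divide_iff)
  qed
  show ?thesis
  proof (rule measurable_bounded_by_integrable_imp_absolutely_integrable)
    show "g \<in> borel_measurable (lebesgue_on {0<..})"
      by (rule continuous_imp_measurable_on_sets_lebesgue[OF c]) (rule sets_completionI_sets, simp add: borel_open[OF open_greaterThan])
    show "{0<..} \<in> sets (lebesgue :: real measure)" by (rule sets_completionI_sets) (simp add: borel_open[OF open_greaterThan])
    show "(\<lambda>z. (M/ell) / ((1 + z/ell) * sqrt (1 + z/ell))) integrable_on {0<..}"
      by (rule h_integrable[OF l M0])
    fix z :: real assume z: "z \<in> {0<..}"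
    hence z0: "z > 0" by simp
    have x0: "z/ell > 0" using z0 l by simp
    have "norm (g z) \<le> \<bar>besselJ2 (z/ell)\<bar> / z" using b[OF z0] by simp
    also have "\<dots> = (\<bar>besselJ2 (z/ell)\<bar> / (z/ell)) / ell" using l by simp
    also have "\<dots> \<le> (M / ((1 + z/ell) * sqrt (1 + z/ell))) / ell"
      using M[OF x0] l by (intro divide_right_mono) auto
    also have "\<dots> = (M/ell) / ((1 + z/ell) * sqrt (1 + z/ell))" by simp
    finally show "norm (g z) \<le> (M/ell) / ((1 + z/ell) * sqrt (1 + z/ell))" .
  qed
qed

lemma deriv_in_closed:
  fixes f :: "real \<Rightarrow> 'a::euclidean_space"
  assumes d: "(f has_vector_derivative v) (at x)" and S: "subspace S"
    and U: "open U" "x \<in> U" and fS: "\<And>y. y \<in> U \<Longrightarrow> f y - f x \<in> S"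
  shows "v \<in> S"
proof -
  have "(f has_derivative (\<lambda>h. h *\<^sub>R v)) (at x)" using d by (simp add: has_vector_derivative_def)
  hence t: "((\<lambda>y. ((f y - f x) - (y - x) *\<^sub>R v) /\<^sub>R norm (y - x)) \<longlongrightarrow> 0) (at x)"
    by (simp add: has_derivative_at_within)
  have "((\<lambda>y. norm (((f y - f x) - (y - x) *\<^sub>R v) /\<^sub>R norm (y - x))) \<longlongrightarrow> 0) (at x)"
    using tendsto_norm_zero[OF t] .
  moreover have "eventually (\<lambda>y. norm (((f y - f x) - (y - x) *\<^sub>R v) /\<^sub>R norm (y - x)) = norm ((f y - f x) /\<^sub>R (y - x) - v)) (at x)"
  proof -
    have "y \<noteq> x \<longrightarrow> norm (((f y - f x) - (y - x) *\<^sub>R v) /\<^sub>R norm (y - x)) = norm ((f y - f x) /\<^sub>R (y - x) - v)" for y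
    proof
      assume "y \<noteq> x"
      hence ne: "y - x \<noteq> 0" by simp
      have "((f y - f x) - (y - x) *\<^sub>R v) /\<^sub>R (y - x) = (f y - f x) /\<^sub>R (y - x) - (inverse (y-x) * (y-x)) *\<^sub>R v"
        by (simp add: scaleR_diff_right)
      hence "(f y - f x) /\<^sub>R (y - x) - v = ((f y - f x) - (y - x) *\<^sub>R v) /\<^sub>R (y - x)"
        using ne by simp
      thus "norm (((f y - f x) - (y - x) *\<^sub>R v) /\<^sub>R norm (y - x)) = norm ((f y - f x) /\<^sub>R (y - x) - v)"
        by simp
    qed
    thus ?thesis by (auto simp: eventually_at_filter)
  qed
  ultimately have "((\<lambda>y. norm ((f y - f x) /\<^sub>R (y - x) - v)) \<longlongrightarrow> 0) (at x)"
    by (rule Lim_transform_eventually)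
  hence "((\<lambda>y. (f y - f x) /\<^sub>R (y - x) - v) \<longlongrightarrow> 0) (at x)"
    by (simp add: tendsto_norm_zero_iff)
  hence lim: "((\<lambda>y. (f y - f x) /\<^sub>R (y - x)) \<longlongrightarrow> v) (at x)"
    by (simp add: LIM_zero_iff)
  show ?thesis
  proof (rule Lim_in_closed_set[OF closed_subspace[OF S] _ _ lim])
    show "eventually (\<lambda>y. (f y - f x) /\<^sub>R (y - x) \<in> S) (at x)"
      using eventually_at_in_open'[OF U] by eventually_elim (use fS S in \<open>auto intro: subspace_scale\<close>)
    show "at x \<noteq> bot" by simp
  qed
qed

lemma mink_self: "mink v v = norm (snd v) ^ 2 - fst v ^ 2"
  unfolding mink_def power2_norm_eq_inner by (simp add: power2_eq_square)

lemma rap_dir_tanh: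
  assumes f: "fst v > 0" and m: "mink v v = -1"
  shows "tanh (fst (rap_dir v)) *\<^sub>R snd (rap_dir v) = (1 / fst v) *\<^sub>R snd v"
proof -
  define f where "f = fst v"
  define S where "S = snd v"
  have ff: "f^2 = 1 + (norm S)^2" using m unfolding mink_self f_def S_def by simp
  have f1: "f \<ge> 1"
  proof -
    have "f^2 \<ge> 1^2" using ff by simp
    show ?thesis
    proof (rule ccontr)
      assume "\<not> 1 \<le> f"
      hence "f * f < 1 * 1" using f unfolding f_def by (intro mult_strict_mono) auto
      thus False using ff by (simp add: power2_eq_square)
    qed
  qed
  define n :: "real^3" where "n = (if S = 0 then axis 1 1 else S /\<^sub>R norm S)"
  have n1: "norm n = 1" unfolding n_def by simp
  have sh: "sinh (arcosh f) = norm S"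
  proof -
    have "sinh (arcosh f) = sqrt (f^2 - 1)" using f1 by (rule sinh_arcosh_real)
    also have "\<dots> = norm S" using ff by simp
    finally show ?thesis .
  qed
  have Sn: "S = sinh (arcosh f) *\<^sub>R n" unfolding sh n_def by auto
  have ex: "\<exists>p. (case p of (c, n) \<Rightarrow> c \<ge> 0 \<and> norm n = 1 \<and> fst v = cosh c \<and> snd v = sinh c *\<^sub>R n)"
    by (rule exI[of _ "(arcosh f, n)"]) (use f1 n1 Sn in \<open>simp add: f_def S_def\<close>)
  obtain c0 n0 where p: "rap_dir v = (c0, n0)" by (cases "rap_dir v")
  have "case rap_dir v of (c, n) \<Rightarrow> c \<ge> 0 \<and> norm n = 1 \<and> fst v = cosh c \<and> snd v = sinh c *\<^sub>R n"
    unfolding rap_dir_def by (rule someI_ex[OF ex])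
  hence h: "fst v = cosh c0" "snd v = sinh c0 *\<^sub>R n0" using p by auto
  have "cosh c0 > 0" by (rule cosh_real_pos)
  thus ?thesis unfolding p h by (simp add: tanh_def divide_inverse)
qed

lemma bound_alg:
  fixes uu vv :: real and n :: "real^3"
  assumes n: "norm n = 1" and u: "\<bar>uu\<bar> < 1" and v: "\<bar>vv\<bar> < 1"
  shows "1 - uu * vv > 0" "\<bar>(uu - vv) * n $ s\<bar> \<le> 1 - uu * vv"
proof -
  have "\<bar>uu\<bar> * \<bar>vv\<bar> \<le> \<bar>uu\<bar>" using v by (intro mult_left_le) auto
  hence "\<bar>uu * vv\<bar> < 1" using u by (simp add: abs_mult)
  thus "1 - uu * vv > 0" by simp
  have ns: "\<bar>n $ s\<bar> \<le> 1" using component_le_norm_cart[of n s] n by simp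
  have "\<bar>(uu - vv) * n $ s\<bar> \<le> \<bar>uu - vv\<bar>" using ns by (simp add: abs_mult mult_left_le)
  also have "\<bar>uu - vv\<bar> \<le> 1 - uu * vv"
  proof -
    have "0 \<le> (1 - uu) * (1 + vv)" using u v by (intro mult_nonneg_nonneg) auto
    moreover have "0 \<le> (1 + uu) * (1 - vv)" using u v by (intro mult_nonneg_nonneg) auto
    ultimately show ?thesis by (simp add: algebra_simps abs_le_iff)
  qed
  finally show "\<bar>(uu - vv) * n $ s\<bar> \<le> 1 - uu * vv" .
qed

locale wsetup =
  fixes a b :: ereal and \<xi> :: "real \<Rightarrow> event" and P :: "event set" and \<tau>0 :: real
    and L :: "event \<Rightarrow> event" and c :: event
  assumes wl: "worldline a b \<xi>" and tp: "timelike_plane P" and inP: "\<forall>t\<in>dom_I a b. \<xi> t \<in> P"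
    and t0: "\<tau>0 \<in> dom_I a b" and Lo: "lorentz_orthochronous L"
    and d0: "((\<lambda>t. L (\<xi> t) + c) has_vector_derivative e0) (at \<tau>0)"
begin

abbreviation "I \<equiv> dom_I a b"
definition xi :: "real \<Rightarrow> event" where "xi = (\<lambda>t. L (\<xi> t) + c)"

lemma I_open: "open I"
  using open_einterval[of a b] unfolding einterval_def dom_I_def .

lemma I_conv: "s \<in> I \<Longrightarrow> t \<in> I \<Longrightarrow> s \<le> u \<Longrightarrow> u \<le> t \<Longrightarrow> u \<in> I"
proof -
  assume "s \<in> I" "t \<in> I" "s \<le> u" "u \<le> t"
  hence h: "a < ereal s" "ereal s \<le> ereal u" "ereal u \<le> ereal t" "ereal t < b" unfolding dom_I_def by auto
  have "a < ereal u" using h(1,2) by (rule less_le_trans)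
  moreover have "ereal u < b" using h(3,4) by (rule le_less_trans)
  ultimately show "u \<in> I" unfolding dom_I_def by simp
qed

lemma L_lin: "linear L" using Lo unfolding lorentz_orthochronous_def by simp
lemma L_bl: "bounded_linear L" using L_lin linear_conv_bounded_linear by blast
lemma L_mink: "mink (L x) (L y) = mink x y" using Lo unfolding lorentz_orthochronous_def by blast

definition Df :: "nat \<Rightarrow> real \<Rightarrow> event" where
  "Df = (SOME Df. (\<forall>t\<in>I. Df 0 t = \<xi> t) \<and> (\<forall>k. \<forall>t\<in>I. (Df k has_vector_derivative Df (Suc k) t) (at t)))"

lemma Df_props: "(\<forall>t\<in>I. Df 0 t = \<xi> t) \<and> (\<forall>k. \<forall>t\<in>I. (Df k has_vector_derivative Df (Suc k) t) (at t))"
proof -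
  have "\<exists>Df. (\<forall>t\<in>I. Df 0 t = \<xi> t) \<and> (\<forall>k. \<forall>t\<in>I. (Df k has_vector_derivative Df (Suc k) t) (at t))"
    using wl unfolding worldline_def smooth_curve_def by blast
  thus ?thesis unfolding Df_def by (rule someI_ex)
qed

lemma xi0_deriv: "t \<in> I \<Longrightarrow> (\<xi> has_vector_derivative Df 1 t) (at t)"
proof -
  assume t: "t \<in> I"
  have "(Df 0 has_vector_derivative Df (Suc 0) t) (at t)" using Df_props t by blast
  from has_vector_derivative_transform_within_open[OF this I_open t] Df_props
  show ?thesis by (simp add: One_nat_def)
qed

lemma Df1_cont: "t \<in> I \<Longrightarrow> isCont (Df 1) t"
proof -
  assume t: "t \<in> I"
  have "(Df 1 has_vector_derivative Df (Suc 1) t) (at t)" using Df_props t by blast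
  thus ?thesis by (rule has_vector_derivative_continuous)
qed

definition vel :: "real \<Rightarrow> event" where "vel t = L (Df 1 t)"

lemma xi_deriv: "t \<in> I \<Longrightarrow> (xi has_vector_derivative vel t) (at t)"
proof -
  assume t: "t \<in> I"
  have "((\<lambda>t. L (\<xi> t)) has_vector_derivative L (Df 1 t)) (at t)"
    using bounded_linear.has_vector_derivative[OF L_bl xi0_deriv[OF t]] .
  thus ?thesis unfolding xi_def vel_def by (auto intro!: derivative_eq_intros)
qed

lemma vel_cont: "t \<in> I \<Longrightarrow> isCont vel t"
proof -
  assume t: "t \<in> I"
  have "isCont (L \<circ> Df 1) t" by (rule continuous_at_compose[OF Df1_cont[OF t] linear_continuous_at[OF L_bl]])
  thus ?thesis unfolding vel_def[abs_def] comp_def .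
qed

lemma xi_cont: "t \<in> I \<Longrightarrow> isCont xi t"
  using xi_deriv has_vector_derivative_continuous by blast

lemma vel_unit: "t \<in> I \<Longrightarrow> mink (vel t) (vel t) = -1"
proof -
  assume t: "t \<in> I"
  have "vector_derivative \<xi> (at t) = Df 1 t" by (rule vector_derivative_at[OF xi0_deriv[OF t]])
  thus ?thesis using wl t unfolding worldline_def vel_def L_mink by auto
qed

lemma vel0: "vel \<tau>0 = e0"
  using vector_derivative_unique_at[OF xi_deriv[OF t0], of e0] d0 unfolding xi_def by simp

end

definition par :: "real^3 \<Rightarrow> event \<Rightarrow> bool" where
  "par n z \<longleftrightarrow> snd z = (snd z \<bullet> n) *\<^sub>R n"

lemma unit_dir: "\<exists>n::real^3. norm n = 1 \<and> (\<forall>k. k *\<^sub>R m = ((k *\<^sub>R m) \<bullet> n) *\<^sub>R n)"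
proof (cases "m = 0")
  case True thus ?thesis by (intro exI[of _ "axis 1 1"]) simp
next
  case False
  show ?thesis
  proof (intro exI[of _ "m /\<^sub>R norm m"] conjI allI)
    show "norm (m /\<^sub>R norm m) = 1" using False by simp
    fix k :: real
    have mm: "m \<bullet> m = norm m * norm m" by (metis dot_square_norm power2_eq_square)
    have "(k *\<^sub>R m) \<bullet> (m /\<^sub>R norm m) = k * norm m"
      using False by (simp add: mm)
    thus "k *\<^sub>R m = ((k *\<^sub>R m) \<bullet> (m /\<^sub>R norm m)) *\<^sub>R (m /\<^sub>R norm m)"
      using False by (simp add: mm)
  qed
qed

lemma subspace_par: "subspace {z. par n z}"
  unfolding subspace_def par_def
proof (intro conjI ballI allI)
  show "0 \<in> {z. snd z = (snd z \<bullet> n) *\<^sub>R n}" by simp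
next
  fix x y :: event assume "x \<in> {z. snd z = (snd z \<bullet> n) *\<^sub>R n}" "y \<in> {z. snd z = (snd z \<bullet> n) *\<^sub>R n}"
  hence x: "snd x = (snd x \<bullet> n) *\<^sub>R n" and y: "snd y = (snd y \<bullet> n) *\<^sub>R n" by auto
  have "snd (x + y) = (snd x \<bullet> n) *\<^sub>R n + (snd y \<bullet> n) *\<^sub>R n" using x y by simp
  also have "\<dots> = (snd (x + y) \<bullet> n) *\<^sub>R n" by (simp add: inner_add_left scaleR_add_left)
  finally show "x + y \<in> {z. snd z = (snd z \<bullet> n) *\<^sub>R n}" by simp
next
  fix k :: real and x :: event assume "x \<in> {z. snd z = (snd z \<bullet> n) *\<^sub>R n}"
  hence x: "snd x = (snd x \<bullet> n) *\<^sub>R n" by auto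
  have e1: "snd (k *\<^sub>R x) = (k * (snd x \<bullet> n)) *\<^sub>R n" using x by (metis scaleR_scaleR snd_scaleR)
  have e2: "snd (k *\<^sub>R x) \<bullet> n = k * (snd x \<bullet> n)" by simp
  have "snd (k *\<^sub>R x) = (snd (k *\<^sub>R x) \<bullet> n) *\<^sub>R n" unfolding e2 by (rule e1)
  thus "k *\<^sub>R x \<in> {z. snd z = (snd z \<bullet> n) *\<^sub>R n}" by (simp only: mem_Collect_eq)
qed

context wsetup begin

lemma exists_n: "\<exists>n::real^3. norm n = 1 \<and> (\<forall>t\<in>I. par n (xi t - xi \<tau>0))"
proof -
  obtain p u w where P: "P = {p + s *\<^sub>R u + t *\<^sub>R w | s t. True}"
    using tp unfolding timelike_plane_def by blast
  define S2 where "S2 = {z. \<exists>s r. z = s *\<^sub>R L u + r *\<^sub>R L w}"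
  have sub: "subspace S2" unfolding subspace_def S2_def
  proof (intro conjI ballI allI)
    show "0 \<in> {z. \<exists>s r. z = s *\<^sub>R L u + r *\<^sub>R L w}" by (auto intro: exI[of _ 0])
  next
    fix x y assume "x \<in> {z. \<exists>s r. z = s *\<^sub>R L u + r *\<^sub>R L w}" "y \<in> {z. \<exists>s r. z = s *\<^sub>R L u + r *\<^sub>R L w}"
    then obtain s1 r1 s2 r2 where "x = s1 *\<^sub>R L u + r1 *\<^sub>R L w" "y = s2 *\<^sub>R L u + r2 *\<^sub>R L w" by auto
    hence "x + y = (s1 + s2) *\<^sub>R L u + (r1 + r2) *\<^sub>R L w" by (simp add: algebra_simps)
    thus "x + y \<in> {z. \<exists>s r. z = s *\<^sub>R L u + r *\<^sub>R L w}" by blast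
  next
    fix k :: real and x assume "x \<in> {z. \<exists>s r. z = s *\<^sub>R L u + r *\<^sub>R L w}"
    then obtain s1 r1 where "x = s1 *\<^sub>R L u + r1 *\<^sub>R L w" by auto
    hence "k *\<^sub>R x = (k * s1) *\<^sub>R L u + (k * r1) *\<^sub>R L w" by (simp add: algebra_simps)
    thus "k *\<^sub>R x \<in> {z. \<exists>s r. z = s *\<^sub>R L u + r *\<^sub>R L w}" by blast
  qed
  have inS2: "xi t - xi \<tau>0 \<in> S2" if t: "t \<in> I" for t
  proof -
    obtain s1 r1 where 1: "\<xi> t = p + s1 *\<^sub>R u + r1 *\<^sub>R w" using inP t P by auto
    obtain s2 r2 where 2: "\<xi> \<tau>0 = p + s2 *\<^sub>R u + r2 *\<^sub>R w" using inP t0 P by auto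
    have "xi t - xi \<tau>0 = L (\<xi> t - \<xi> \<tau>0)" unfolding xi_def using linear_diff[OF L_lin] by simp
    also have "\<xi> t - \<xi> \<tau>0 = (s1 - s2) *\<^sub>R u + (r1 - r2) *\<^sub>R w" unfolding 1 2 by (simp add: algebra_simps)
    also have "L \<dots> = (s1 - s2) *\<^sub>R L u + (r1 - r2) *\<^sub>R L w"
      using linear_add[OF L_lin] linear_scale[OF L_lin] by simp
    finally show ?thesis unfolding S2_def by blast
  qed
  have "e0 \<in> S2"
  proof (rule deriv_in_closed[OF _ sub I_open t0])
    show "(xi has_vector_derivative e0) (at \<tau>0)" using xi_deriv[OF t0] vel0 by simp
    show "\<And>y. y \<in> I \<Longrightarrow> xi y - xi \<tau>0 \<in> S2" by (rule inS2)
  qed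
  then obtain \<alpha> \<beta> where e: "e0 = \<alpha> *\<^sub>R L u + \<beta> *\<^sub>R L w" unfolding S2_def by blast
  define A where "A = snd (L u)"
  define B where "B = snd (L w)"
  have sA: "0 = \<alpha> *\<^sub>R A + \<beta> *\<^sub>R B" using arg_cong[OF e, of snd] unfolding A_def B_def by (simp add: e0_def)
  have fA: "1 = \<alpha> * fst (L u) + \<beta> * fst (L w)" using arg_cong[OF e, of fst] by (simp add: e0_def)
  have "\<exists>m. \<forall>s r. \<exists>k. s *\<^sub>R A + r *\<^sub>R B = k *\<^sub>R m"
  proof (cases "\<alpha> = 0")
    case True
    hence "\<beta> \<noteq> 0" using fA by auto
    hence "B = 0" using sA True by simp
    thus ?thesis by (intro exI[of _ A] allI exI) simp
  next
    case False
    have aA: "\<alpha> *\<^sub>R A = - (\<beta> *\<^sub>R B)" using sA by (simp add: eq_neg_iff_add_eq_0)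
    have "A = (1/\<alpha>) *\<^sub>R (\<alpha> *\<^sub>R A)" using False by simp
    also have "\<dots> = (- \<beta> / \<alpha>) *\<^sub>R B" unfolding aA by simp
    finally have "A = (- \<beta> / \<alpha>) *\<^sub>R B" .
    hence "s *\<^sub>R A + r *\<^sub>R B = (s * (- \<beta> / \<alpha>) + r) *\<^sub>R B" for s r by (simp add: algebra_simps)
    thus ?thesis by blast
  qed
  then obtain m where m: "\<And>s r. \<exists>k. s *\<^sub>R A + r *\<^sub>R B = k *\<^sub>R m" by blast
  obtain n where n: "norm n = 1" "\<And>k. k *\<^sub>R m = ((k *\<^sub>R m) \<bullet> n) *\<^sub>R n" using unit_dir by blast
  have "par n (xi t - xi \<tau>0)" if t: "t \<in> I" for t
  proof -
    obtain s1 r1 where "xi t - xi \<tau>0 = s1 *\<^sub>R L u + r1 *\<^sub>R L w" using inS2[OF t] unfolding S2_def by blast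
    hence "snd (xi t - xi \<tau>0) = s1 *\<^sub>R A + r1 *\<^sub>R B" unfolding A_def B_def by simp
    moreover obtain k where "s1 *\<^sub>R A + r1 *\<^sub>R B = k *\<^sub>R m" using m by blast
    moreover have "n \<bullet> n = 1" using n(1) by (simp add: norm_eq_1)
    ultimately show ?thesis unfolding par_def using n(2)[of k] by simp
  qed
  thus ?thesis using n by blast
qed

end

context wsetup begin

definition nd :: "real^3" where "nd = (SOME n. norm n = 1 \<and> (\<forall>t\<in>I. par n (xi t - xi \<tau>0)))"

lemma nd_props: "norm nd = 1" "\<And>t. t \<in> I \<Longrightarrow> par nd (xi t - xi \<tau>0)"
proof -
  have "norm nd = 1 \<and> (\<forall>t\<in>I. par nd (xi t - xi \<tau>0))"
    unfolding nd_def by (rule someI_ex[OF exists_n])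
  thus "norm nd = 1" "\<And>t. t \<in> I \<Longrightarrow> par nd (xi t - xi \<tau>0)" by auto
qed

lemma nn: "nd \<bullet> nd = 1" using nd_props(1) by (simp add: norm_eq_1)

lemma vel_par: "t \<in> I \<Longrightarrow> par nd (vel t)"
proof -
  assume t: "t \<in> I"
  have "vel t \<in> {z. par nd z}"
  proof (rule deriv_in_closed[OF xi_deriv[OF t] subspace_par I_open t])
    fix y assume y: "y \<in> I"
    have "(xi y - xi \<tau>0) - (xi t - xi \<tau>0) \<in> {z. par nd z}"
      using nd_props(2)[OF y] nd_props(2)[OF t] subspace_diff[OF subspace_par] by blast
    thus "xi y - xi t \<in> {z. par nd z}" by simp
  qed
  thus ?thesis by simp
qed

definition Tf :: "real \<Rightarrow> real" where "Tf t = fst (xi t - xi \<tau>0)"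
definition Rf :: "real \<Rightarrow> real" where "Rf t = snd (xi t - xi \<tau>0) \<bullet> nd"
definition v0 :: "real \<Rightarrow> real" where "v0 t = fst (vel t)"
definition v1 :: "real \<Rightarrow> real" where "v1 t = snd (vel t) \<bullet> nd"

lemma bl_snd_n: "bounded_linear (\<lambda>z::event. snd z \<bullet> nd)"
  by (rule bounded_linear_compose[OF bounded_linear_inner_left bounded_linear_snd])

lemma Tf_deriv: "t \<in> I \<Longrightarrow> (Tf has_real_derivative v0 t) (at t)"
proof -
  assume t: "t \<in> I"
  have "((\<lambda>t. fst (xi t)) has_vector_derivative fst (vel t)) (at t)"
    using bounded_linear.has_vector_derivative[OF bounded_linear_fst xi_deriv[OF t]] .
  hence "((\<lambda>t. fst (xi t) - fst (xi \<tau>0)) has_vector_derivative fst (vel t)) (at t)"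
    by (auto intro!: derivative_eq_intros)
  thus ?thesis unfolding Tf_def v0_def has_real_derivative_iff_has_vector_derivative by simp
qed

lemma Rf_deriv: "t \<in> I \<Longrightarrow> (Rf has_real_derivative v1 t) (at t)"
proof -
  assume t: "t \<in> I"
  have "((\<lambda>t. snd (xi t) \<bullet> nd) has_vector_derivative snd (vel t) \<bullet> nd) (at t)"
    using bounded_linear.has_vector_derivative[OF bl_snd_n xi_deriv[OF t]] .
  hence "((\<lambda>t. snd (xi t) \<bullet> nd - snd (xi \<tau>0) \<bullet> nd) has_vector_derivative snd (vel t) \<bullet> nd) (at t)"
    by (auto intro!: derivative_eq_intros)
  thus ?thesis unfolding Rf_def v1_def has_real_derivative_iff_has_vector_derivative
    by (simp add: inner_diff_left)
qed

lemma norm_par: "par nd z \<Longrightarrow> norm (snd z) ^ 2 = (snd z \<bullet> nd)^2"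
proof -
  assume "par nd z"
  hence "snd z = (snd z \<bullet> nd) *\<^sub>R nd" unfolding par_def .
  hence "norm (snd z) = \<bar>snd z \<bullet> nd\<bar>" using nd_props(1) by (metis norm_scaleR mult.right_neutral)
  thus ?thesis by simp
qed

lemma v_rel: "t \<in> I \<Longrightarrow> v0 t ^ 2 = 1 + v1 t ^ 2"
  using vel_unit[of t] norm_par[OF vel_par[of t]] unfolding mink_self v0_def v1_def by simp

lemma v0_cont: "t \<in> I \<Longrightarrow> isCont v0 t"
  unfolding v0_def[abs_def] using vel_cont by (intro continuous_intros) auto

lemma v1_cont: "t \<in> I \<Longrightarrow> isCont v1 t"
  unfolding v1_def[abs_def] using vel_cont by (intro continuous_intros) auto

lemma v0_t0: "v0 \<tau>0 = 1" unfolding v0_def vel0 e0_def by simp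

lemma v0_pos: "t \<in> I \<Longrightarrow> v0 t > 0"
proof (rule ccontr)
  assume t: "t \<in> I" and "\<not> v0 t > 0"
  hence neg: "v0 t \<le> 0" by simp
  have contI: "continuous_on {x..y} v0" if "x \<in> I" "y \<in> I" for x y
    using that by (intro continuous_at_imp_continuous_on ballI v0_cont) (auto intro: I_conv)
  obtain x where x: "x \<in> I" "v0 x = 0"
  proof (cases "t \<le> \<tau>0")
    case True
    obtain x where "t \<le> x" "x \<le> \<tau>0" "v0 x = 0"
      using IVT'[of v0 t 0 \<tau>0] neg v0_t0 True contI[OF t t0] by auto
    thus ?thesis using that I_conv[OF t t0] by blast
  next
    case False
    obtain x where "\<tau>0 \<le> x" "x \<le> t" "v0 x = 0"
      using IVT2'[of v0 t 0 \<tau>0] neg v0_t0 False contI[OF t0 t] by auto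
    thus ?thesis using that I_conv[OF t0 t] by blast
  qed
  thus False using v_rel[OF x(1)] by simp (smt (verit) zero_le_power2)
qed

lemma v1_lt: "t \<in> I \<Longrightarrow> \<bar>v1 t\<bar> < v0 t"
proof -
  assume t: "t \<in> I"
  have "\<bar>v1 t\<bar>^2 < v0 t ^ 2" using v_rel[OF t] by simp
  thus ?thesis using v0_pos[OF t] by (smt (verit) power_mono abs_ge_zero)
qed

definition pp :: "real \<Rightarrow> real" where "pp t = - (Tf t + Rf t)"
definition qq :: "real \<Rightarrow> real" where "qq t = - (Tf t - Rf t)"

lemma pp_deriv: "t \<in> I \<Longrightarrow> (pp has_real_derivative - (v0 t + v1 t)) (at t)"
  unfolding pp_def[abs_def] by (auto intro!: derivative_eq_intros Tf_deriv Rf_deriv)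
lemma qq_deriv: "t \<in> I \<Longrightarrow> (qq has_real_derivative - (v0 t - v1 t)) (at t)"
  unfolding qq_def[abs_def] by (auto intro!: derivative_eq_intros Tf_deriv Rf_deriv)

lemma pp_dec: "s \<in> I \<Longrightarrow> t \<in> I \<Longrightarrow> s < t \<Longrightarrow> pp t < pp s"
proof -
  assume st: "s \<in> I" "t \<in> I" "s < t"
  show "pp t < pp s"
  proof (rule DERIV_neg_imp_decreasing[OF st(3)])
    fix x assume "s \<le> x" "x \<le> t"
    hence x: "x \<in> I" using I_conv st by blast
    show "\<exists>y. DERIV pp x :> y \<and> y < 0"
      using pp_deriv[OF x] v1_lt[OF x] by (intro exI[of _ "- (v0 x + v1 x)"]) auto
  qed
qed

lemma qq_dec: "s \<in> I \<Longrightarrow> t \<in> I \<Longrightarrow> s < t \<Longrightarrow> qq t < qq s"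
proof -
  assume st: "s \<in> I" "t \<in> I" "s < t"
  show "qq t < qq s"
  proof (rule DERIV_neg_imp_decreasing[OF st(3)])
    fix x assume "s \<le> x" "x \<le> t"
    hence x: "x \<in> I" using I_conv st by blast
    show "\<exists>y. DERIV qq x :> y \<and> y < 0"
      using qq_deriv[OF x] v1_lt[OF x] by (intro exI[of _ "- (v0 x - v1 x)"]) auto
  qed
qed

lemma pp_t0: "pp \<tau>0 = 0" and qq_t0: "qq \<tau>0 = 0"
  unfolding pp_def qq_def Tf_def Rf_def by simp_all

lemma pp_pos: "t \<in> I \<Longrightarrow> t < \<tau>0 \<Longrightarrow> pp t > 0"
  using pp_dec[OF _ t0] pp_t0 by fastforce
lemma qq_pos: "t \<in> I \<Longrightarrow> t < \<tau>0 \<Longrightarrow> qq t > 0"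
  using qq_dec[OF _ t0] qq_t0 by fastforce

definition Dd :: "real \<Rightarrow> real" where "Dd t = mdist (xi \<tau>0 - xi t)"

lemma Dd_eq: "t \<in> I \<Longrightarrow> Dd t = sqrt (pp t * qq t)"
proof -
  assume t: "t \<in> I"
  have m: "mink (xi \<tau>0 - xi t) (xi \<tau>0 - xi t) = mink (xi t - xi \<tau>0) (xi t - xi \<tau>0)"
    unfolding mink_def by (simp add: algebra_simps inner_diff_left inner_diff_right inner_commute)
  have "- mink (xi t - xi \<tau>0) (xi t - xi \<tau>0) = Tf t ^ 2 - Rf t ^ 2"
    unfolding mink_self Tf_def Rf_def norm_par[OF nd_props(2)[OF t]] by simp
  also have "\<dots> = pp t * qq t" unfolding pp_def qq_def by (simp add: algebra_simps power2_eq_square)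
  finally show ?thesis unfolding Dd_def mdist_def m by simp
qed

lemma Dd_t0: "Dd \<tau>0 = 0" unfolding Dd_def mdist_def mink_def by simp

lemma Dd_pos: "t \<in> I \<Longrightarrow> t < \<tau>0 \<Longrightarrow> Dd t > 0"
  using Dd_eq pp_pos qq_pos by simp

lemma Dd_dec: "s \<in> I \<Longrightarrow> s < t \<Longrightarrow> t \<le> \<tau>0 \<Longrightarrow> Dd t < Dd s"
proof -
  assume s: "s \<in> I" and st: "s < t" and tt: "t \<le> \<tau>0"
  have t: "t \<in> I" using I_conv[OF s t0] st tt by simp
  show ?thesis
  proof (cases "t = \<tau>0")
    case True thus ?thesis using Dd_t0 Dd_pos[OF s] st by simp
  next
    case False
    hence tl: "t < \<tau>0" using tt by simp
    have "pp t * qq t < pp s * qq s"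
      using pp_dec[OF s t st] qq_dec[OF s t st] pp_pos[OF t tl] qq_pos[OF t tl]
      by (intro mult_strict_mono) auto
    thus ?thesis unfolding Dd_eq[OF s] Dd_eq[OF t] by simp
  qed
qed

lemma Dd_cont: "t \<in> I \<Longrightarrow> isCont Dd t"
  unfolding Dd_def[abs_def] mdist_def mink_def using xi_cont
  by (intro continuous_intros) auto

end

lemma sq_ge1: "(0::real) < f \<Longrightarrow> 1 \<le> f^2 \<Longrightarrow> 1 \<le> f"
proof (rule ccontr)
  assume f: "0 < f" "1 \<le> f^2" "\<not> 1 \<le> f"
  hence "f * f < 1 * 1" by (intro mult_strict_mono) auto
  thus False using f by (simp add: power2_eq_square)
qed

context wsetup begin

definition Gr :: "event \<Rightarrow> event" where
  "Gr y = (- mink y (L e0), \<chi> i. mink y (L (0, axis i 1)))"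

lemma Gr_L: "Gr (L x) = x"
proof -
  have 1: "- mink (L x) (L e0) = fst x" unfolding L_mink by (simp add: mink_def e0_def)
  have 2: "mink (L x) (L (0, axis i 1)) = snd x $ i" for i unfolding L_mink by (simp add: mink_def inner_axis)
  show ?thesis unfolding Gr_def 1 2 by (simp add: vec_lambda_eta)
qed

lemma xi_recover: "\<xi> t = Gr (xi t - c)"
  unfolding xi_def using Gr_L by simp

lemma Gr_tendsto: "(f \<longlongrightarrow> l) F \<Longrightarrow> ((\<lambda>t. Gr (f t)) \<longlongrightarrow> Gr l) F"
  unfolding Gr_def mink_def by (intro tendsto_intros)

lemma xi_repr: "t \<in> I \<Longrightarrow> xi t = xi \<tau>0 + (- (pp t + qq t) / 2, ((qq t - pp t) / 2) *\<^sub>R nd)"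
proof -
  assume t: "t \<in> I"
  have "xi t - xi \<tau>0 = (Tf t, Rf t *\<^sub>R nd)"
    using nd_props(2)[OF t] unfolding par_def Tf_def Rf_def by (simp add: prod_eq_iff)
  moreover have "Tf t = - (pp t + qq t) / 2" "Rf t = (qq t - pp t) / 2" unfolding pp_def qq_def by simp_all
  ultimately show ?thesis by (simp add: algebra_simps)
qed

lemma exists_below: "\<exists>ts. ts \<in> I \<and> ts < \<tau>0"
proof (cases a)
  case (real a0)
  hence "a0 < \<tau>0" using t0 unfolding dom_I_def by simp
  hence "(a0 + \<tau>0)/2 \<in> I \<and> (a0 + \<tau>0)/2 < \<tau>0"
    using t0 real unfolding dom_I_def by (auto intro: le_less_trans[of _ "ereal \<tau>0"])
  thus ?thesis by blast
next
  case PInf thus ?thesis using t0 unfolding dom_I_def by simp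
next
  case MInf
  hence "\<tau>0 - 1 \<in> I" using t0 unfolding dom_I_def by (auto intro: le_less_trans[of _ "ereal \<tau>0"])
  thus ?thesis by auto
qed

lemma mono_lim:
  fixes f :: "real \<Rightarrow> real" and a0 ts B :: real
  assumes a0: "a0 < ts" and dec: "\<And>s t. a0 < s \<Longrightarrow> s < t \<Longrightarrow> t \<le> ts \<Longrightarrow> f t < f s"
    and bd: "\<And>t. a0 < t \<Longrightarrow> t \<le> ts \<Longrightarrow> f t \<le> B"
  shows "\<exists>l. (f \<longlongrightarrow> l) (at_right a0)"
proof -
  define S where "S = {a0<..ts}"
  have ne: "S \<noteq> {}" using a0 unfolding S_def by auto
  have bdd: "bdd_above (f ` S)" using bd unfolding S_def by (auto intro!: bdd_aboveI)
  have "(f \<longlongrightarrow> Sup (f ` S)) (at_right a0)"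
  proof (rule increasing_tendsto)
    show "eventually (\<lambda>t. f t \<le> Sup (f ` S)) (at_right a0)"
      unfolding eventually_at_right_field using a0 bdd unfolding S_def
      by (intro exI[of _ ts]) (auto intro!: cSUP_upper)
  next
    fix x assume "x < Sup (f ` S)"
    then obtain s where s: "s \<in> S" "x < f s" using less_cSUP_iff[OF ne bdd] by blast
    show "eventually (\<lambda>t. x < f t) (at_right a0)"
      unfolding eventually_at_right_field using s
      by (intro exI[of _ s]) (auto simp: S_def intro: less_trans[OF _ dec])
  qed
  thus ?thesis by blast
qed

lemma unbounded: "\<exists>t\<in>I. t < \<tau>0 \<and> Dd t > Z"
proof (rule ccontr)
  assume "\<not> ?thesis"
  hence H: "\<And>t. t \<in> I \<Longrightarrow> t < \<tau>0 \<Longrightarrow> Dd t \<le> Z" by force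
  obtain ts where ts: "ts \<in> I" "ts < \<tau>0" using exists_below by blast
  define P0 where "P0 = pp ts"
  define Q0 where "Q0 = qq ts"
  have P0: "P0 > 0" using pp_pos[OF ts] unfolding P0_def .
  have Q0: "Q0 > 0" using qq_pos[OF ts] unfolding Q0_def .
  have below: "pp t \<ge> P0 \<and> qq t \<ge> Q0 \<and> pp t * qq t \<le> Z^2" if t: "t \<in> I" "t \<le> ts" for t
  proof -
    have tl: "t < \<tau>0" using t ts by simp
    have "pp t \<ge> P0" "qq t \<ge> Q0" unfolding P0_def Q0_def
      using pp_dec[OF t(1) ts(1)] qq_dec[OF t(1) ts(1)] t(2) by (cases "t = ts"; force)+
    moreover have "pp t * qq t \<le> Z^2"
    proof -
      have pq: "pp t * qq t \<ge> 0" using pp_pos[OF t(1) tl] qq_pos[OF t(1) tl] by simp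
      have "sqrt (pp t * qq t) \<le> Z" using H[OF t(1) tl] Dd_eq[OF t(1)] by simp
      hence "(sqrt (pp t * qq t))^2 \<le> Z^2" using pq by (intro power_mono) auto
      thus ?thesis using pq by simp
    qed
    ultimately show ?thesis by blast
  qed
  have bp: "pp t \<le> Z^2 / Q0" and bq: "qq t \<le> Z^2 / P0" if t: "t \<in> I" "t \<le> ts" for t
  proof -
    have b: "pp t \<ge> P0" "qq t \<ge> Q0" "pp t * qq t \<le> Z^2" using below[OF t] by auto
    have "pp t * Q0 \<le> pp t * qq t" using b P0 by (intro mult_left_mono) auto
    thus "pp t \<le> Z^2 / Q0" using b Q0 by (simp add: pos_le_divide_eq)
    have "P0 * qq t \<le> pp t * qq t" using b Q0 P0 by (intro mult_right_mono) auto
    thus "qq t \<le> Z^2 / P0" using b P0 by (simp add: pos_le_divide_eq mult.commute)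
  qed
  show False
  proof (cases a)
    case PInf thus ?thesis using t0 unfolding dom_I_def by simp
  next
    case MInf
    have bts: "ereal ts < b" using ts(1) unfolding dom_I_def by simp
    have inI2: "t \<in> I" if "t \<le> ts" for t
    proof -
      have "ereal t < b" using that by (intro le_less_trans[OF _ bts]) simp
      thus ?thesis using MInf unfolding dom_I_def by simp
    qed
    define K where "K = Z^2 / Q0 + Z^2 / P0"
    define t where "t = ts - K - 1"
    have K0: "K \<ge> 0" unfolding K_def using P0 Q0 by simp
    have tts: "t \<le> ts" unfolding t_def using K0 by simp
    define \<phi> where "\<phi> s = pp s + qq s + 2 * s" for s
    have dphi: "\<exists>y. DERIV \<phi> x :> y \<and> y \<le> 0" if "t \<le> x" "x \<le> ts" for x
    proof -
      have x: "x \<in> I" using that by (intro inI2) simp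
      have v: "v0 x \<ge> 1"
      proof -
        have "v0 x ^2 \<ge> 1" using v_rel[OF x] by simp
        thus ?thesis by (rule sq_ge1[OF v0_pos[OF x]])
      qed
      have d2: "((\<lambda>s::real. 2 * s) has_real_derivative 2) (at x)" by (auto intro!: derivative_eq_intros)
      have "DERIV (\<lambda>s. pp s + qq s + 2 * s) x :> (- (v0 x + v1 x) + - (v0 x - v1 x) + 2)"
        by (rule DERIV_add[OF DERIV_add[OF pp_deriv[OF x] qq_deriv[OF x]] d2])
      hence "DERIV \<phi> x :> (- (v0 x + v1 x) + - (v0 x - v1 x) + 2)" unfolding \<phi>_def[abs_def] .
      moreover have "- (v0 x + v1 x) + - (v0 x - v1 x) + 2 \<le> 0" using v by simp
      ultimately show ?thesis by blast
    qed
    have "\<phi> ts \<le> \<phi> t" by (rule DERIV_nonpos_imp_nonincreasing[OF tts dphi])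
    hence mono: "pp ts + qq ts + 2 * ts \<le> pp t + qq t + 2 * t" unfolding \<phi>_def .
    have tI: "t \<in> I" using inI2[OF tts] .
    have b1: "pp t \<le> Z^2 / Q0" using bp[OF tI tts] .
    have b2: "qq t \<le> Z^2 / P0" using bq[OF tI tts] .
    show False using mono b1 b2 P0 Q0 K0 K_def t_def unfolding P0_def Q0_def by linarith
  next
    case (real a0)
    have a0: "a0 < ts" using ts(1) real unfolding dom_I_def by simp
    have inI: "t \<in> I" if "a0 < t" "t \<le> ts" for t using that real ts(1) unfolding dom_I_def
      by (auto intro: le_less_trans[of _ "ereal ts"])
    have dp: "pp t < pp s \<and> qq t < qq s" if "a0 < s" "s < t" "t \<le> ts" for s t
    proof -
      have sI: "s \<in> I" by (rule inI) (use that in auto)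
      have tI: "t \<in> I" by (rule inI) (use that in auto)
      show ?thesis using pp_dec[OF sI tI] qq_dec[OF sI tI] that by simp
    qed
    have bb: "pp t \<le> Z^2 / Q0 \<and> qq t \<le> Z^2 / P0" if "a0 < t" "t \<le> ts" for t
    proof -
      have tI: "t \<in> I" by (rule inI) (use that in auto)
      show ?thesis using bp[OF tI] bq[OF tI] that by simp
    qed
    obtain lp where lp: "(pp \<longlongrightarrow> lp) (at_right a0)"
      using mono_lim[OF a0, of pp "Z^2 / Q0"] dp bb by blast
    obtain lq where lq: "(qq \<longlongrightarrow> lq) (at_right a0)"
      using mono_lim[OF a0, of qq "Z^2 / P0"] dp bb by blast
    have "((\<lambda>t. xi \<tau>0 + (- (pp t + qq t) / 2, ((qq t - pp t) / 2) *\<^sub>R nd)) \<longlongrightarrow>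
           xi \<tau>0 + (- (lp + lq) / 2, ((lq - lp) / 2) *\<^sub>R nd)) (at_right a0)"
      by (intro tendsto_intros lp lq) simp_all
    moreover have "eventually (\<lambda>t. xi \<tau>0 + (- (pp t + qq t) / 2, ((qq t - pp t) / 2) *\<^sub>R nd) = xi t) (at_right a0)"
      unfolding eventually_at_right_field using a0
      by (intro exI[of _ ts]) (auto simp: xi_repr[OF inI])
    ultimately have "(xi \<longlongrightarrow> xi \<tau>0 + (- (lp + lq) / 2, ((lq - lp) / 2) *\<^sub>R nd)) (at_right a0)"
      by (rule Lim_transform_eventually)
    hence "((\<lambda>t. Gr (xi t - c)) \<longlongrightarrow> Gr (xi \<tau>0 + (- (lp + lq) / 2, ((lq - lp) / 2) *\<^sub>R nd) - c)) (at_right a0)"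
      by (intro Gr_tendsto tendsto_intros)
    hence "\<exists>l. (\<xi> \<longlongrightarrow> l) (at_right a0)" unfolding xi_recover[symmetric] by blast
    thus False using wl real unfolding worldline_def inextendible_def by blast
  qed
qed

end

context wsetup begin

abbreviation vp :: "real \<Rightarrow> real" where "vp \<equiv> varpi a xi \<tau>0"

lemma I_lt_t0: "t < \<tau>0 \<Longrightarrow> a < ereal t \<Longrightarrow> t \<in> I"
proof -
  assume "t < \<tau>0" "a < ereal t"
  moreover have "ereal \<tau>0 < b" using t0 unfolding dom_I_def by simp
  ultimately show "t \<in> I" unfolding dom_I_def by (auto intro: less_trans[of "ereal t" "ereal \<tau>0" b])
qed

lemma Dd_def': "mdist (xi \<tau>0 - xi t) = Dd t" unfolding Dd_def ..

lemma vp_exists: "\<zeta> > 0 \<Longrightarrow> \<exists>\<tau>. a < ereal \<tau> \<and> \<tau> < \<tau>0 \<and> mdist (xi \<tau>0 - xi \<tau>) = \<zeta>"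
proof -
  assume z: "\<zeta> > 0"
  obtain t1 where t1: "t1 \<in> I" "t1 < \<tau>0" "Dd t1 > \<zeta>" using unbounded[of \<zeta>] by blast
  have "continuous_on {t1..\<tau>0} Dd"
    by (intro continuous_at_imp_continuous_on ballI Dd_cont) (auto intro: I_conv[OF t1(1) t0])
  then obtain x where x: "t1 \<le> x" "x \<le> \<tau>0" "Dd x = \<zeta>"
    using IVT2'[of Dd \<tau>0 \<zeta> t1] Dd_t0 z t1 by auto
  have "x \<noteq> \<tau>0" using x Dd_t0 z by auto
  moreover have "x \<in> I" using I_conv[OF t1(1) t0] x by simp
  ultimately show ?thesis using x unfolding Dd_def' dom_I_def by auto
qed

lemma vp_unique:
  assumes "a < ereal s" "s < \<tau>0" "a < ereal t" "t < \<tau>0" "Dd s = Dd t" shows "s = t"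
proof -
  have sI: "s \<in> I" and tI: "t \<in> I" using I_lt_t0 assms by auto
  show ?thesis
  proof (rule ccontr)
    assume "s \<noteq> t"
    hence "s < t \<or> t < s" by auto
    thus False using Dd_dec[OF sI, of t] Dd_dec[OF tI, of s] assms by auto
  qed
qed

lemma vp_props: assumes z: "\<zeta> > 0" shows "vp \<zeta> \<in> I" "vp \<zeta> < \<tau>0" "Dd (vp \<zeta>) = \<zeta>"
proof -
  have "a < ereal (vp \<zeta>) \<and> vp \<zeta> < \<tau>0 \<and> mdist (xi \<tau>0 - xi (vp \<zeta>)) = \<zeta>"
    unfolding varpi_def
  proof (rule theI')
    show "\<exists>!\<tau>. a < ereal \<tau> \<and> \<tau> < \<tau>0 \<and> mdist (xi \<tau>0 - xi \<tau>) = \<zeta>"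
      using vp_exists[OF z] vp_unique unfolding Dd_def' by metis
  qed
  thus "vp \<zeta> \<in> I" "vp \<zeta> < \<tau>0" "Dd (vp \<zeta>) = \<zeta>" using I_lt_t0 unfolding Dd_def' by auto
qed

lemma vp_Dd: assumes t: "t \<in> I" "t < \<tau>0" shows "vp (Dd t) = t"
proof -
  have at: "a < ereal t" using t unfolding dom_I_def by simp
  show ?thesis unfolding varpi_def
  proof (rule the_equality)
    show "a < ereal t \<and> t < \<tau>0 \<and> mdist (xi \<tau>0 - xi t) = Dd t" using at t unfolding Dd_def' by simp
    fix \<tau> assume "a < ereal \<tau> \<and> \<tau> < \<tau>0 \<and> mdist (xi \<tau>0 - xi \<tau>) = Dd t"
    thus "\<tau> = t" using vp_unique[of \<tau> t] at t unfolding Dd_def' by auto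
  qed
qed

lemma vp_cont: assumes z: "\<zeta> > 0" shows "isCont vp \<zeta>"
proof -
  define x where "x = vp \<zeta>"
  have x: "x \<in> I" "x < \<tau>0" "Dd x = \<zeta>" using vp_props[OF z] unfolding x_def by auto
  obtain e where e: "e > 0" "ball x e \<subseteq> I" using I_open x(1) open_contains_ball by blast
  define d where "d = min (e/2) ((\<tau>0 - x)/2)"
  have d: "d > 0" unfolding d_def using e x by simp
  have zI: "z \<in> I \<and> z < \<tau>0" if "\<bar>z - x\<bar> \<le> d" for z
  proof -
    have "dist z x < e" using that e unfolding d_def dist_real_def by simp
    hence "z \<in> ball x e" by (simp add: dist_commute)
    moreover have "\<bar>z - x\<bar> \<le> (\<tau>0 - x)/2" using that unfolding d_def by simp
    hence "z - x \<le> (\<tau>0 - x)/2" by (rule order_trans[OF abs_ge_self])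
    hence "z < \<tau>0" using x(2) by (simp add: field_simps)
    ultimately show ?thesis using e by auto
  qed
  have "isCont vp (Dd x)"
  proof (rule isCont_inverse_function[where f=Dd and g=vp, OF d])
    fix z assume "\<bar>z - x\<bar> \<le> d"
    hence "z \<in> I" "z < \<tau>0" using zI by auto
    thus "vp (Dd z) = z" using vp_Dd by auto
  next
    fix z assume "\<bar>z - x\<bar> \<le> d"
    hence "z \<in> I" using zI by auto
    thus "isCont Dd z" using Dd_cont by auto
  qed
  thus ?thesis using x by simp
qed

end

lemma mink_scale: "mink (k *\<^sub>R z) (k *\<^sub>R z) = k^2 * mink z z"
  unfolding mink_def by (simp add: power2_eq_square algebra_simps)

context wsetup begin

definition uu :: "real \<Rightarrow> real" where "uu z = Rf (vp z) / Tf (vp z)"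
definition vv :: "real \<Rightarrow> real" where "vv z = v1 (vp z) / v0 (vp z)"

lemma Tf_neg: "t \<in> I \<Longrightarrow> t < \<tau>0 \<Longrightarrow> Tf t < 0 \<and> \<bar>Rf t\<bar> < - Tf t"
  using pp_pos[of t] qq_pos[of t] unfolding pp_def qq_def by auto

lemma tanh_mu: assumes z: "\<zeta> > 0"
  shows "tanh (psi a xi \<tau>0 \<zeta>) *\<^sub>R mu a xi \<tau>0 \<zeta> = uu \<zeta> *\<^sub>R nd"
proof -
  define \<tau> where "\<tau> = vp \<zeta>"
  have \<tau>: "\<tau> \<in> I" "\<tau> < \<tau>0" "Dd \<tau> = \<zeta>" using vp_props[OF z] unfolding \<tau>_def by auto
  define w where "w = (1 / \<zeta>) *\<^sub>R (xi \<tau>0 - xi \<tau>)"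
  have diff: "xi \<tau>0 - xi \<tau> = (- Tf \<tau>, (- Rf \<tau>) *\<^sub>R nd)"
    using nd_props(2)[OF \<tau>(1)] unfolding par_def Tf_def Rf_def
    by (simp add: prod_eq_iff algebra_simps)
  have T: "Tf \<tau> < 0" using Tf_neg[OF \<tau>(1,2)] by simp
  have fw: "fst w > 0" unfolding w_def diff using z T by (simp add: divide_neg_pos)
  have pq: "pp \<tau> * qq \<tau> = \<zeta>^2"
    using \<tau>(3) Dd_eq[OF \<tau>(1)] pp_pos[OF \<tau>(1,2)] qq_pos[OF \<tau>(1,2)] by auto
  have mz: "mink (xi \<tau>0 - xi \<tau>) (xi \<tau>0 - xi \<tau>) = - (pp \<tau> * qq \<tau>)"
    unfolding diff mink_self using nd_props(1) unfolding pp_def qq_def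
    by (simp add: power2_eq_square algebra_simps)
  have mw: "mink w w = -1" unfolding w_def mink_scale mz pq using z by (simp add: power2_eq_square)
  have "tanh (psi a xi \<tau>0 \<zeta>) *\<^sub>R mu a xi \<tau>0 \<zeta> = (1 / fst w) *\<^sub>R snd w"
    unfolding psi_def mu_def \<tau>_def[symmetric] w_def[symmetric] by (rule rap_dir_tanh[OF fw mw])
  also have "\<dots> = uu \<zeta> *\<^sub>R nd" unfolding w_def diff uu_def \<tau>_def[symmetric] using z T
    by (simp add: field_simps)
  finally show ?thesis .
qed

lemma tanh_nu: assumes z: "\<zeta> > 0"
  shows "tanh (chi a xi \<tau>0 \<zeta>) *\<^sub>R nu a xi \<tau>0 \<zeta> = vv \<zeta> *\<^sub>R nd"
proof -
  define \<tau> where "\<tau> = vp \<zeta>"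
  have \<tau>: "\<tau> \<in> I" using vp_props[OF z] unfolding \<tau>_def by auto
  have vd: "vector_derivative xi (at \<tau>) = vel \<tau>" by (rule vector_derivative_at[OF xi_deriv[OF \<tau>]])
  have f: "fst (vel \<tau>) > 0" using v0_pos[OF \<tau>] unfolding v0_def .
  have "tanh (chi a xi \<tau>0 \<zeta>) *\<^sub>R nu a xi \<tau>0 \<zeta> = (1 / fst (vel \<tau>)) *\<^sub>R snd (vel \<tau>)"
    unfolding chi_def nu_def \<tau>_def[symmetric] vd by (rule rap_dir_tanh[OF f vel_unit[OF \<tau>]])
  also have "snd (vel \<tau>) = v1 \<tau> *\<^sub>R nd" using vel_par[OF \<tau>] unfolding par_def v1_def .
  finally show ?thesis unfolding vv_def \<tau>_def[symmetric] v0_def by simp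
qed

lemma uu_bd: "\<zeta> > 0 \<Longrightarrow> \<bar>uu \<zeta>\<bar> < 1"
proof -
  assume z: "\<zeta> > 0"
  have \<tau>: "vp \<zeta> \<in> I" "vp \<zeta> < \<tau>0" using vp_props[OF z] by auto
  have T: "Tf (vp \<zeta>) < 0" "\<bar>Rf (vp \<zeta>)\<bar> < - Tf (vp \<zeta>)" using Tf_neg[OF \<tau>] by auto
  have "\<bar>uu \<zeta>\<bar> = \<bar>Rf (vp \<zeta>)\<bar> / (- Tf (vp \<zeta>))" unfolding uu_def using T by (simp add: abs_div)
  also have "\<dots> < 1" by (subst pos_divide_less_eq) (use T in auto)
  finally show ?thesis .
qed

lemma vv_bd: "\<zeta> > 0 \<Longrightarrow> \<bar>vv \<zeta>\<bar> < 1"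
proof -
  assume z: "\<zeta> > 0"
  have \<tau>: "vp \<zeta> \<in> I" using vp_props[OF z] by auto
  have "\<bar>vv \<zeta>\<bar> = \<bar>v1 (vp \<zeta>)\<bar> / v0 (vp \<zeta>)" unfolding vv_def using v0_pos[OF \<tau>] by (simp add: abs_div)
  also have "\<dots> < 1" using v1_lt[OF \<tau>] v0_pos[OF \<tau>] by simp
  finally show ?thesis .
qed

lemma uu_cont: "\<zeta> > 0 \<Longrightarrow> isCont uu \<zeta>"
proof -
  assume z: "\<zeta> > 0"
  have \<tau>: "vp \<zeta> \<in> I" "vp \<zeta> < \<tau>0" using vp_props[OF z] by auto
  have cR: "isCont Rf (vp \<zeta>)" using DERIV_isCont[OF Rf_deriv[OF \<tau>(1)]] .
  have cT: "isCont Tf (vp \<zeta>)" using DERIV_isCont[OF Tf_deriv[OF \<tau>(1)]] .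
  have "isCont (\<lambda>z. Rf (vp z)) \<zeta>" using continuous_at_compose[OF vp_cont[OF z] cR] by (simp add: o_def)
  moreover have "isCont (\<lambda>z. Tf (vp z)) \<zeta>" using continuous_at_compose[OF vp_cont[OF z] cT] by (simp add: o_def)
  ultimately show ?thesis unfolding uu_def[abs_def] using Tf_neg[OF \<tau>]
    by (intro continuous_intros) auto
qed

lemma vv_cont: "\<zeta> > 0 \<Longrightarrow> isCont vv \<zeta>"
proof -
  assume z: "\<zeta> > 0"
  have \<tau>: "vp \<zeta> \<in> I" using vp_props[OF z] by auto
  have "isCont (\<lambda>z. v1 (vp z)) \<zeta>" using continuous_at_compose[OF vp_cont[OF z] v1_cont[OF \<tau>]] by (simp add: o_def)
  moreover have "isCont (\<lambda>z. v0 (vp z)) \<zeta>" using continuous_at_compose[OF vp_cont[OF z] v0_cont[OF \<tau>]] by (simp add: o_def)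
  ultimately show ?thesis unfolding vv_def[abs_def] using v0_pos[OF \<tau>]
    by (intro continuous_intros) auto
qed

lemma main_int:
  assumes l: "ell > 0"
  shows "(\<lambda>\<zeta>. (tanh (psi a xi \<tau>0 \<zeta>) * (mu a xi \<tau>0 \<zeta>) $ \<sigma>
                      - tanh (chi a xi \<tau>0 \<zeta>) * (nu a xi \<tau>0 \<zeta>) $ \<sigma>)
                     * besselJ2 (\<zeta> / ell) / (Delta a xi \<tau>0 \<zeta> * \<zeta>))
               absolutely_integrable_on {0<..}"
proof -
  define g where "g \<zeta> = (uu \<zeta> - vv \<zeta>) * nd $ \<sigma> * besselJ2 (\<zeta> / ell) / ((1 - uu \<zeta> * vv \<zeta>) * \<zeta>)" for \<zeta>
  have eq: "(tanh (psi a xi \<tau>0 \<zeta>) * (mu a xi \<tau>0 \<zeta>) $ \<sigma>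
                      - tanh (chi a xi \<tau>0 \<zeta>) * (nu a xi \<tau>0 \<zeta>) $ \<sigma>)
                     * besselJ2 (\<zeta> / ell) / (Delta a xi \<tau>0 \<zeta> * \<zeta>) = g \<zeta>" if z: "\<zeta> > 0" for \<zeta>
  proof -
    have m: "tanh (psi a xi \<tau>0 \<zeta>) * (mu a xi \<tau>0 \<zeta>) $ \<sigma> = uu \<zeta> * nd $ \<sigma>"
      using arg_cong[OF tanh_mu[OF z], of "\<lambda>v. v $ \<sigma>"] by simp
    have n: "tanh (chi a xi \<tau>0 \<zeta>) * (nu a xi \<tau>0 \<zeta>) $ \<sigma> = vv \<zeta> * nd $ \<sigma>"
      using arg_cong[OF tanh_nu[OF z], of "\<lambda>v. v $ \<sigma>"] by simp
    have "tanh (psi a xi \<tau>0 \<zeta>) * tanh (chi a xi \<tau>0 \<zeta>) * (mu a xi \<tau>0 \<zeta> \<bullet> nu a xi \<tau>0 \<zeta>)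
          = (tanh (psi a xi \<tau>0 \<zeta>) *\<^sub>R mu a xi \<tau>0 \<zeta>) \<bullet> (tanh (chi a xi \<tau>0 \<zeta>) *\<^sub>R nu a xi \<tau>0 \<zeta>)"
      by (simp add: algebra_simps)
    also have "\<dots> = uu \<zeta> * vv \<zeta>" unfolding tanh_mu[OF z] tanh_nu[OF z] using nn by simp
    finally have D: "Delta a xi \<tau>0 \<zeta> = 1 - uu \<zeta> * vv \<zeta>" unfolding Delta_def by simp
    show ?thesis unfolding m n D g_def by (simp add: algebra_simps)
  qed
  have cg: "continuous_on {0<..} g"
  proof (rule continuous_at_imp_continuous_on, rule ballI)
    fix \<zeta> :: real assume "\<zeta> \<in> {0<..}"
    hence z: "\<zeta> > 0" by simp
    have c1: "isCont (\<lambda>\<zeta>. \<zeta> / ell) \<zeta>" using l by (intro continuous_intros) auto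
    have cJ: "isCont (\<lambda>\<zeta>. besselJ2 (\<zeta> / ell)) \<zeta>"
      using continuous_at_compose[OF c1 DERIV_isCont[OF J2_deriv]] by (simp add: o_def)
    have "1 - uu \<zeta> * vv \<zeta> > 0" using bound_alg(1)[OF nd_props(1) uu_bd[OF z] vv_bd[OF z]] .
    thus "isCont g \<zeta>" unfolding g_def[abs_def] using z uu_cont[OF z] vv_cont[OF z] cJ
      by (intro continuous_intros) auto
  qed
  have "g absolutely_integrable_on {0<..}"
  proof (rule integrand_abs_int[OF l cg])
    fix \<zeta> :: real assume z: "\<zeta> > 0"
    have b: "1 - uu \<zeta> * vv \<zeta> > 0" "\<bar>(uu \<zeta> - vv \<zeta>) * nd $ \<sigma>\<bar> \<le> 1 - uu \<zeta> * vv \<zeta>"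
      using bound_alg[OF nd_props(1) uu_bd[OF z] vv_bd[OF z]] by auto
    have "\<bar>g \<zeta>\<bar> = \<bar>(uu \<zeta> - vv \<zeta>) * nd $ \<sigma>\<bar> / (1 - uu \<zeta> * vv \<zeta>) * (\<bar>besselJ2 (\<zeta> / ell)\<bar> / \<zeta>)"
      unfolding g_def using b z by (simp add: abs_mult abs_div)
    also have "\<dots> \<le> 1 * (\<bar>besselJ2 (\<zeta> / ell)\<bar> / \<zeta>)"
      using b z by (intro mult_right_mono) (auto simp: divide_le_eq)
    finally show "\<bar>g \<zeta>\<bar> \<le> \<bar>besselJ2 (\<zeta> / ell)\<bar> / \<zeta>" by simp
  qed
  thus ?thesis by (rule absolutely_integrable_spike[of _ _ "{}"]) (use eq in auto)
qed

end

theorem proposition3: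
  fixes ell :: real and a b :: ereal and \<xi> :: "real \<Rightarrow> event" and P :: "event set"
  assumes "ell > 0"
    and "worldline a b \<xi>"
    and "timelike_plane P"
    and "\<forall>t\<in>dom_I a b. \<xi> t \<in> P"
  shows "\<forall>\<tau>0\<in>dom_I a b. \<forall>L c. lorentz_orthochronous L \<longrightarrow>
           (let \<xi>' = (\<lambda>t. L (\<xi> t) + c) in
             (\<xi>' has_vector_derivative e0) (at \<tau>0) \<longrightarrow>
             (\<forall>\<sigma> :: 3.
               (\<lambda>\<zeta>. (tanh (psi a \<xi>' \<tau>0 \<zeta>) * (mu a \<xi>' \<tau>0 \<zeta>) $ \<sigma>
                      - tanh (chi a \<xi>' \<tau>0 \<zeta>) * (nu a \<xi>' \<tau>0 \<zeta>) $ \<sigma>)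
                     * besselJ2 (\<zeta> / ell) / (Delta a \<xi>' \<tau>0 \<zeta> * \<zeta>))
               absolutely_integrable_on {0<..}))"
proof (intro ballI allI impI)
  fix \<tau>0 L c assume t0: "\<tau>0 \<in> dom_I a b" and Lo: "lorentz_orthochronous L"
  show "let \<xi>' = (\<lambda>t. L (\<xi> t) + c) in
             (\<xi>' has_vector_derivative e0) (at \<tau>0) \<longrightarrow>
             (\<forall>\<sigma> :: 3.
               (\<lambda>\<zeta>. (tanh (psi a \<xi>' \<tau>0 \<zeta>) * (mu a \<xi>' \<tau>0 \<zeta>) $ \<sigma>
                      - tanh (chi a \<xi>' \<tau>0 \<zeta>) * (nu a \<xi>' \<tau>0 \<zeta>) $ \<sigma>)
                     * besselJ2 (\<zeta> / ell) / (Delta a \<xi>' \<tau>0 \<zeta> * \<zeta>))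
               absolutely_integrable_on {0<..})"
    unfolding Let_def
  proof (intro impI allI)
    fix \<sigma> :: 3 assume d0: "((\<lambda>t. L (\<xi> t) + c) has_vector_derivative e0) (at \<tau>0)"
    interpret W: wsetup a b \<xi> P \<tau>0 L c
      using assms(2-4) t0 Lo d0 by unfold_locales auto
    show "(\<lambda>\<zeta>. (tanh (psi a (\<lambda>t. L (\<xi> t) + c) \<tau>0 \<zeta>) * (mu a (\<lambda>t. L (\<xi> t) + c) \<tau>0 \<zeta>) $ \<sigma>
                      - tanh (chi a (\<lambda>t. L (\<xi> t) + c) \<tau>0 \<zeta>) * (nu a (\<lambda>t. L (\<xi> t) + c) \<tau>0 \<zeta>) $ \<sigma>)
                     * besselJ2 (\<zeta> / ell) / (Delta a (\<lambda>t. L (\<xi> t) + c) \<tau>0 \<zeta> * \<zeta>))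
               absolutely_integrable_on {0<..}"
      using W.main_int[OF assms(1), of \<sigma>] unfolding W.xi_def .
  qed
qed

end
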